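(* Let $X,Y:[0,T]\to\mathbb R^2$ be $C^1$ and $\Psi:\mathbb R^2\to\mathbb R^2$ be $C^1$ with $\dot Y=\Psi(Y)$. Let $E_+=\{\Psi_1>0\}$, $E_-=\{\Psi_1<0\}$. Suppose that $X(0)=Y(0)\in E_+\cup E_-$; that for $t\in(0,T]$, $\Psi_1(X(t)),\Psi_1(Y(t))>0$ if $X(0)\in E_+$ and $\Psi_1(X(t)),\Psi_1(Y(t))<0$ if $X(0)\in E_-$; and that $\dot X\le_2\Psi(X)$ (resp. $\dot X\ge_2\Psi(X)$) on $[0,T]$. Then $f_X=X_2\circ X_1^{-1}$ and $f_Y=Y_2\circ Y_1^{-1}$ are well defined, differentiable for $u\ne X_1(0)$, and $f_X(u)\le f_Y(u)$ (resp. $f_X(u)\ge f_Y(u)$) on the intersection of their domains.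
   Context: For $v,w\in\mathbb R^2$, $v\le_2w$ means $v_1=w_1$ and $v_2\le w_2$; $v\ge_2 w$ is defined analogously. *)

theory Defs
  imports "HOL-Analysis.Analysis"
begin

definition le2 :: "real \<times> real \<Rightarrow> real \<times> real \<Rightarrow> bool" where
  "le2 v w \<longleftrightarrow> fst v = fst w \<and> snd v \<le> snd w"

definition ge2 :: "real \<times> real \<Rightarrow> real \<times> real \<Rightarrow> bool" where
  "ge2 v w \<longleftrightarrow> fst v = fst w \<and> snd v \<ge> snd w"

definition graph_fun :: "real \<Rightarrow> (real \<Rightarrow> real \<times> real) \<Rightarrow> real \<Rightarrow> real" where
  "graph_fun T X = (\<lambda>u. snd (X (the_inv_into {0..T} (\<lambda>t. fst (X t)) u)))"

definition graph_dom :: "real \<Rightarrow> (real \<Rightarrow> real \<times> real) \<Rightarrow> real set" where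
  "graph_dom T X = (\<lambda>t. fst (X t)) ` {0..T}"

end

theory Submission imports Defs begin


lemma mvt_der:
  fixes f f' :: "real \<Rightarrow> real"
  assumes "a < b" "continuous_on {a..b} f"
    "\<And>x. a < x \<Longrightarrow> x < b \<Longrightarrow> (f has_real_derivative f' x) (at x)"
  shows "\<exists>z. a < z \<and> z < b \<and> f b - f a = (b - a) * f' z"
proof -
  have "\<And>x. a < x \<Longrightarrow> x < b \<Longrightarrow> f differentiable (at x)"
    using assms(3) real_differentiable_def by blast
  from MVT[OF assms(1,2) this] obtain l z where
    z: "a < z" "z < b" "DERIV f z :> l" "f b - f a = (b - a) * l" by blast
  have "l = f' z" using DERIV_unique[OF z(3) assms(3)[OF z(1,2)]] .
  with z show ?thesis by blast
qed

lemma core_fwd: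
  fixes p q p' q' :: "real\<Rightarrow>real" and G :: "real\<Rightarrow>real\<Rightarrow>real"
  assumes cd: "c \<le> d"
    and pc: "continuous_on {c..d} p" and qc: "continuous_on {c..d} q"
    and init: "p c = q c"
    and pd: "\<forall>x\<in>{c<..<d}. (p has_real_derivative p' x) (at x within {c..d}) \<and> p' x \<le> G x (p x)"
    and qd: "\<forall>x\<in>{c<..<d}. (q has_real_derivative q' x) (at x within {c..d}) \<and> q' x \<ge> G x (q x)"
    and lip: "\<forall>a\<in>{c..d}. p a = q a \<longrightarrow> (\<exists>\<delta>>0. \<exists>L. \<forall>v y1 y2. \<bar>v - a\<bar> < \<delta> \<longrightarrow>
        \<bar>y1 - q a\<bar> < \<delta> \<longrightarrow> \<bar>y2 - q a\<bar> < \<delta> \<longrightarrow> \<bar>G v y1 - G v y2\<bar> \<le> L * \<bar>y1 - y2\<bar>)"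
  shows "p d \<le> q d"
proof (rule ccontr)
  assume nd: "\<not> p d \<le> q d"
  define S where "S = {x \<in> {c..d}. p x \<le> q x}"
  have clS: "closed S" unfolding S_def
    by (rule continuous_on_closed_Collect_le[OF pc qc closed_atLeastAtMost])
  have cS: "c \<in> S" using cd init by (simp add: S_def)
  have bS: "bdd_above S" unfolding S_def by (rule bdd_aboveI[of _ d]) auto
  define a where "a = Sup S"
  have aS: "a \<in> S" unfolding a_def using closed_contains_Sup[OF _ bS clS] cS by blast
  have ub: "\<And>x. x \<in> S \<Longrightarrow> x \<le> a" unfolding a_def using bS by (simp add: cSup_upper)
  have acd: "c \<le> a" "a \<le> d" using aS by (auto simp: S_def)
  have ad: "a < d" using aS nd acd by (cases "a = d") (auto simp: S_def)
  have gt: "\<And>x. a < x \<Longrightarrow> x \<le> d \<Longrightarrow> p x > q x"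
  proof -
    fix x assume "a < x" "x \<le> d"
    with acd have "x \<in> {c..d}" by auto
    with ub[of x] \<open>a < x\<close> show "p x > q x" by (force simp: S_def)
  qed
  have contpq: "continuous_on {c..d} (\<lambda>x. p x - q x)" using pc qc by (intro continuous_intros)
  have eq: "p a = q a"
  proof (rule ccontr)
    assume "p a \<noteq> q a"
    with aS have pos: "q a - p a > 0" by (auto simp: S_def)
    have "a \<in> {c..d}" using acd by auto
    with contpq have "\<forall>e>0. \<exists>d'>0. \<forall>x'\<in>{c..d}. dist x' a < d' \<longrightarrow> dist (p x' - q x') (p a - q a) < e"
      unfolding continuous_on_iff by blast
    with pos obtain e where e: "e > 0"
      "\<forall>x'\<in>{c..d}. dist x' a < e \<longrightarrow> dist (p x' - q x') (p a - q a) < q a - p a"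
      by blast
    define x where "x = min d (a + e/2)"
    have x: "a < x" "x \<le> d" "x \<in> {c..d}" "dist x a < e" using ad acd e by (auto simp: x_def dist_real_def)
    with e have "dist (p x - q x) (p a - q a) < q a - p a" by blast
    hence "p x \<le> q x" by (simp add: dist_real_def abs_less_iff)
    with gt[OF x(1,2)] show False by simp
  qed
  from lip acd eq obtain \<delta> L where dl: "\<delta> > 0"
    "\<forall>v y1 y2. \<bar>v - a\<bar> < \<delta> \<longrightarrow> \<bar>y1 - q a\<bar> < \<delta> \<longrightarrow> \<bar>y2 - q a\<bar> < \<delta> \<longrightarrow> \<bar>G v y1 - G v y2\<bar> \<le> L * \<bar>y1 - y2\<bar>"
    by auto
  have aI: "a \<in> {c..d}" using acd by auto
  have "\<forall>e>0. \<exists>d'>0. \<forall>x'\<in>{c..d}. dist x' a < d' \<longrightarrow> dist (p x') (p a) < e"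
    using pc aI unfolding continuous_on_iff by blast
  with dl(1) obtain e1 where e1: "e1 > 0"
      "\<forall>x'\<in>{c..d}. dist x' a < e1 \<longrightarrow> dist (p x') (p a) < \<delta>" by blast
  have "\<forall>e>0. \<exists>d'>0. \<forall>x'\<in>{c..d}. dist x' a < d' \<longrightarrow> dist (q x') (q a) < e"
    using qc aI unfolding continuous_on_iff by blast
  with dl(1) obtain e2 where e2: "e2 > 0"
      "\<forall>x'\<in>{c..d}. dist x' a < e2 \<longrightarrow> dist (q x') (q a) < \<delta>" by blast
  define b where "b = min d (a + min \<delta> (min e1 e2) / 2)"
  have b: "a < b" "b \<le> d" using ad dl e1 e2 by (auto simp: b_def)
  have near: "\<And>x. a \<le> x \<Longrightarrow> x \<le> b \<Longrightarrow> \<bar>x - a\<bar> < \<delta> \<and> \<bar>p x - q a\<bar> < \<delta> \<and> \<bar>q x - q a\<bar> < \<delta>"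
  proof -
    fix x assume x: "a \<le> x" "x \<le> b"
    have "x \<in> {c..d}" "dist x a < e1" "dist x a < e2" "\<bar>x - a\<bar> < \<delta>"
      using x acd b dl e1 e2 by (auto simp: b_def dist_real_def)
    with e1 e2 eq show "\<bar>x - a\<bar> < \<delta> \<and> \<bar>p x - q a\<bar> < \<delta> \<and> \<bar>q x - q a\<bar> < \<delta>"
      by (auto simp: dist_real_def)
  qed
  define h where "h = (\<lambda>x. exp (- L * x) * (p x - q x))"
  define h' where "h' = (\<lambda>x. exp (- L * x) * (p' x - q' x) + (- L * exp (- L * x)) * (p x - q x))"
  have hc: "continuous_on {a..b} h" unfolding h_def
    using contpq acd b by (intro continuous_intros continuous_on_subset[OF contpq]) auto
  have hd: "(h has_real_derivative h' x) (at x)" if x: "a < x" "x < b" for x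
  proof -
    have xi: "c < x" "x < d" using x acd b by auto
    have "(p has_real_derivative p' x) (at x within {c..d})" using pd xi by auto
    hence "(p has_real_derivative p' x) (at x)" using at_within_Icc_at[OF xi] by simp
    moreover have "(q has_real_derivative q' x) (at x within {c..d})" using qd xi by auto
    hence "(q has_real_derivative q' x) (at x)" using at_within_Icc_at[OF xi] by simp
    ultimately show ?thesis unfolding h_def h'_def
      by (auto intro!: derivative_eq_intros simp: algebra_simps)
  qed
  from mvt_der[OF b(1) hc hd] obtain z where z: "a < z" "z < b" "h b - h a = (b - a) * h' z" by blast
  have zi: "z \<in> {c<..<d}" using z acd b by auto
  have nz: "\<bar>z - a\<bar> < \<delta>" "\<bar>p z - q a\<bar> < \<delta>" "\<bar>q z - q a\<bar> < \<delta>" using near[of z] z by auto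
  have "p' z - q' z \<le> G z (p z) - G z (q z)" using pd qd zi by force
  also have "\<dots> \<le> L * \<bar>p z - q z\<bar>" using dl(2) nz by fastforce
  also have "\<dots> = L * (p z - q z)" using gt[of z] z b by simp
  finally have le0: "(p' z - q' z) - L*(p z - q z) \<le> 0" by simp
  have "h' z = exp(-L*z) * ((p' z - q' z) - L*(p z - q z))" by (simp add: h'_def algebra_simps)
  hence "h' z \<le> 0" using le0 by (simp add: mult_nonneg_nonpos)
  hence "(b - a) * h' z \<le> 0" using z by (simp add: mult_nonneg_nonpos)
  hence "h b \<le> h a" using z(3) by simp
  moreover have "h a = 0" by (simp add: h_def eq)
  moreover have "h b > 0" using gt[OF b] by (simp add: h_def)
  ultimately show False by simp
qed



lemma inv_deriv_within:
  fixes f g :: "real\<Rightarrow>real"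
  assumes df: "(f has_real_derivative D) (at (g y) within A)" and D: "D \<noteq> 0" and y: "y \<in> S"
    and gS: "\<forall>z\<in>S. g z \<in> A \<and> f (g z) = z" and cont: "continuous (at y within S) g"
  shows "(g has_real_derivative inverse D) (at y within S)"
proof -
  define x where "x = g y"
  have fx: "f x = y" using gS y by (simp add: x_def)
  have 1: "((\<lambda>t. (f t - f x)/(t - x)) \<longlongrightarrow> D) (at x within A)"
    using df has_field_derivative_iff x_def by blast
  have ev: "eventually (\<lambda>z. g z \<in> A \<and> g z \<noteq> x) (at y within S)"
    unfolding eventually_at_filter
  proof (rule always_eventually, intro allI impI)
    fix z assume "z \<noteq> y" "z \<in> S"
    with gS y show "g z \<in> A \<and> g z \<noteq> x" unfolding x_def by metis
  qed
  have "(g \<longlongrightarrow> x) (at y within S)" using cont by (simp add: continuous_within x_def)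
  hence 2: "filterlim g (at x within A) (at y within S)" using ev by (simp add: filterlim_at)
  have 3: "((\<lambda>z. (f (g z) - f x)/(g z - x)) \<longlongrightarrow> D) (at y within S)"
    by (rule filterlim_compose[OF 1 2])
  have 4: "((\<lambda>z. inverse ((f (g z) - f x)/(g z - x))) \<longlongrightarrow> inverse D) (at y within S)"
    by (rule tendsto_inverse[OF 3 D])
  have ev2: "eventually (\<lambda>z. inverse ((f (g z) - f x)/(g z - x)) = (g z - g y)/(z - y)) (at y within S)"
    unfolding eventually_at_filter
  proof (rule always_eventually, intro allI impI)
    fix z assume "z \<noteq> y" "z \<in> S"
    with gS fx show "inverse ((f (g z) - f x)/(g z - x)) = (g z - g y)/(z - y)"
      by (simp add: x_def inverse_divide)
  qed
  have "((\<lambda>z. (g z - g y)/(z - y)) \<longlongrightarrow> inverse D) (at y within S)"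
    using Lim_transform_eventually[OF 4 ev2] .
  thus ?thesis using has_field_derivative_iff by blast
qed



lemma core_bwd:
  fixes p q p' q' :: "real\<Rightarrow>real" and G :: "real\<Rightarrow>real\<Rightarrow>real"
  assumes cd: "d \<le> c"
    and pc: "continuous_on {d..c} p" and qc: "continuous_on {d..c} q"
    and init: "p c = q c"
    and pd: "\<forall>x\<in>{d<..<c}. (p has_real_derivative p' x) (at x within {d..c}) \<and> p' x \<ge> G x (p x)"
    and qd: "\<forall>x\<in>{d<..<c}. (q has_real_derivative q' x) (at x within {d..c}) \<and> q' x \<le> G x (q x)"
    and lip: "\<forall>a\<in>{d..c}. p a = q a \<longrightarrow> (\<exists>\<delta>>0. \<exists>L. \<forall>v y1 y2. \<bar>v - a\<bar> < \<delta> \<longrightarrow>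
        \<bar>y1 - q a\<bar> < \<delta> \<longrightarrow> \<bar>y2 - q a\<bar> < \<delta> \<longrightarrow> \<bar>G v y1 - G v y2\<bar> \<le> L * \<bar>y1 - y2\<bar>)"
  shows "p d \<le> q d"
proof -
  have img: "uminus ` {-c..-d} = {d..(c::real)}" by auto
  have cm: "continuous_on {-c..-d} (uminus::real\<Rightarrow>real)" by (intro continuous_intros)
  have pc': "continuous_on {-c..-d} (\<lambda>v. p (-v))"
    using continuous_on_compose[OF cm, of p] pc img by (simp add: o_def)
  have qc': "continuous_on {-c..-d} (\<lambda>v. q (-v))"
    using continuous_on_compose[OF cm, of q] qc img by (simp add: o_def)
  have der: "((\<lambda>v. f (-v)) has_real_derivative - f' (-x)) (at x within {-c..-d})"
    if "x \<in> {-c<..<-d}" "\<forall>x\<in>{d<..<c}. (f has_real_derivative f' x) (at x within {d..c})"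
    for f f' :: "real \<Rightarrow> real" and x
  proof -
    have xi: "d < -x" "-x < c" using that(1) by auto
    have "(f has_real_derivative f' (-x)) (at (-x) within {d..c})" using that(2) xi by auto
    hence "(f has_real_derivative f' (-x)) (at (-x))" using at_within_Icc_at[OF xi] by simp
    hence "((\<lambda>v. f (-v)) has_real_derivative - f' (-x)) (at x)" using DERIV_mirror by simp
    thus ?thesis by (rule has_field_derivative_at_within)
  qed
  have "p (- (-d)) \<le> q (- (-d))"
  proof (rule core_fwd[where p="\<lambda>v. p (-v)" and q="\<lambda>v. q (-v)" and p'="\<lambda>v. - p' (-v)"
        and q'="\<lambda>v. - q' (-v)" and G="\<lambda>v y. - G (-v) y"])
    show "-c \<le> -d" using cd by simp
    show "continuous_on {-c..-d} (\<lambda>v. p (-v))" by (rule pc')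
    show "continuous_on {-c..-d} (\<lambda>v. q (-v))" by (rule qc')
    show "p (- (-c)) = q (- (-c))" using init by simp
    show "\<forall>x\<in>{-c<..<-d}. ((\<lambda>v. p (-v)) has_real_derivative - p' (-x)) (at x within {-c..-d}) \<and>
          - p' (-x) \<le> - G (-x) (p (-x))"
    proof
      fix x assume x: "x \<in> {-c<..<-d}"
      hence "-x \<in> {d<..<c}" by auto
      with pd have "p' (-x) \<ge> G (-x) (p (-x))" by blast
      with der[OF x] pd show "((\<lambda>v. p (-v)) has_real_derivative - p' (-x)) (at x within {-c..-d}) \<and>
          - p' (-x) \<le> - G (-x) (p (-x))" by auto
    qed
    show "\<forall>x\<in>{-c<..<-d}. ((\<lambda>v. q (-v)) has_real_derivative - q' (-x)) (at x within {-c..-d}) \<and>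
          - q' (-x) \<ge> - G (-x) (q (-x))"
    proof
      fix x assume x: "x \<in> {-c<..<-d}"
      hence "-x \<in> {d<..<c}" by auto
      with qd have "q' (-x) \<le> G (-x) (q (-x))" by blast
      with der[OF x] qd show "((\<lambda>v. q (-v)) has_real_derivative - q' (-x)) (at x within {-c..-d}) \<and>
          - q' (-x) \<ge> - G (-x) (q (-x))" by auto
    qed
    show "\<forall>a\<in>{-c..-d}. p (-a) = q (-a) \<longrightarrow> (\<exists>\<delta>>0. \<exists>L. \<forall>v y1 y2. \<bar>v - a\<bar> < \<delta> \<longrightarrow>
        \<bar>y1 - q (-a)\<bar> < \<delta> \<longrightarrow> \<bar>y2 - q (-a)\<bar> < \<delta> \<longrightarrow> \<bar>- G (-v) y1 - - G (-v) y2\<bar> \<le> L * \<bar>y1 - y2\<bar>)"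
    proof (intro ballI impI)
      fix a assume a: "a \<in> {-c..-d}" "p (-a) = q (-a)"
      hence "-a \<in> {d..c}" by auto
      with lip a obtain \<delta> L where dl: "\<delta> > 0" "\<forall>v y1 y2. \<bar>v - -a\<bar> < \<delta> \<longrightarrow>
        \<bar>y1 - q (-a)\<bar> < \<delta> \<longrightarrow> \<bar>y2 - q (-a)\<bar> < \<delta> \<longrightarrow> \<bar>G v y1 - G v y2\<bar> \<le> L * \<bar>y1 - y2\<bar>"
        by blast
      show "\<exists>\<delta>>0. \<exists>L. \<forall>v y1 y2. \<bar>v - a\<bar> < \<delta> \<longrightarrow>
        \<bar>y1 - q (-a)\<bar> < \<delta> \<longrightarrow> \<bar>y2 - q (-a)\<bar> < \<delta> \<longrightarrow> \<bar>- G (-v) y1 - - G (-v) y2\<bar> \<le> L * \<bar>y1 - y2\<bar>"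
      proof (intro exI conjI allI impI)
        fix v y1 y2 assume "\<bar>v - a\<bar> < \<delta>" "\<bar>y1 - q (-a)\<bar> < \<delta>" "\<bar>y2 - q (-a)\<bar> < \<delta>"
        moreover have "\<bar>-v - -a\<bar> = \<bar>v - a\<bar>" by simp
        ultimately have "\<bar>G (-v) y1 - G (-v) y2\<bar> \<le> L * \<bar>y1 - y2\<bar>" using dl(2) by metis
        thus "\<bar>- G (-v) y1 - - G (-v) y2\<bar> \<le> L * \<bar>y1 - y2\<bar>" by simp
      qed (rule dl(1))
    qed
  qed
  thus ?thesis by simp
qed



lemma comp_derivs:
  assumes "\<forall>t\<in>{0..T}. (Z has_vector_derivative Z' t) (at t within {0..T})"
  shows "\<forall>t\<in>{0..T}. ((\<lambda>t. fst (Z t)) has_real_derivative fst (Z' t)) (at t within {0..T})"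
    and "\<forall>t\<in>{0..T}. ((\<lambda>t. snd (Z t)) has_real_derivative snd (Z' t)) (at t within {0..T})"
proof -
  have f: "((\<lambda>x. fst (Z x)) has_vector_derivative fst v) F" if "(Z has_vector_derivative v) F" for v F
    using bounded_linear.has_vector_derivative[OF bounded_linear_fst that] by simp
  have g: "((\<lambda>x. snd (Z x)) has_vector_derivative snd v) F" if "(Z has_vector_derivative v) F" for v F
    using bounded_linear.has_vector_derivative[OF bounded_linear_snd that] by simp
  show "\<forall>t\<in>{0..T}. ((\<lambda>t. fst (Z t)) has_real_derivative fst (Z' t)) (at t within {0..T})"
    using assms f by (simp add: has_real_derivative_iff_has_vector_derivative)
  show "\<forall>t\<in>{0..T}. ((\<lambda>t. snd (Z t)) has_real_derivative snd (Z' t)) (at t within {0..T})"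
    using assms g by (simp add: has_real_derivative_iff_has_vector_derivative)
qed

lemma Z1_cont:
  assumes "\<forall>t\<in>{0..T}. ((\<lambda>t. fst (Z t)) has_real_derivative D t) (at t within {0..T})"
  shows "continuous_on {0..T} (\<lambda>t. fst (Z t))"
  using assms DERIV_continuous continuous_on_eq_continuous_within by blast

lemma mono_pos:
  fixes Z Z' :: "real \<Rightarrow> real \<times> real"
  assumes dZ: "\<forall>t\<in>{0..T}. (Z has_vector_derivative Z' t) (at t within {0..T})"
    and pos: "\<forall>t\<in>{0..T}. fst (Z' t) > 0" and t: "t \<in> {0..T}"
  shows "fst (Z 0) \<le> fst (Z t)"
proof (cases "t = 0")
  case False
  note d1 = comp_derivs(1)[OF dZ]
  have c: "continuous_on {0..t} (\<lambda>t. fst (Z t))"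
    using continuous_on_subset[OF Z1_cont[OF d1]] t by auto
  have "((\<lambda>t. fst (Z t)) has_real_derivative fst (Z' x)) (at x)" if "0 < x" "x < t" for x
  proof -
    have "((\<lambda>t. fst (Z t)) has_real_derivative fst (Z' x)) (at x within {0..T})" using d1 that t by auto
    thus ?thesis using at_within_Icc_at[of 0 x T] that t by simp
  qed
  from mvt_der[OF _ c this] False t obtain z where "0 < z" "z < t"
    "fst (Z t) - fst (Z 0) = (t - 0) * fst (Z' z)" by force
  moreover have "fst (Z' z) > 0" using pos \<open>0 < z\<close> \<open>z < t\<close> t by auto
  ultimately have "fst (Z t) - fst (Z 0) = t * fst (Z' z)" "t * fst (Z' z) > 0" using t by auto
  thus ?thesis by linarith
qed auto

lemma mono_neg:
  fixes Z Z' :: "real \<Rightarrow> real \<times> real"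
  assumes dZ: "\<forall>t\<in>{0..T}. (Z has_vector_derivative Z' t) (at t within {0..T})"
    and neg: "\<forall>t\<in>{0..T}. fst (Z' t) < 0" and t: "t \<in> {0..T}"
  shows "fst (Z 0) \<ge> fst (Z t)"
proof (cases "t = 0")
  case False
  note d1 = comp_derivs(1)[OF dZ]
  have c: "continuous_on {0..t} (\<lambda>t. fst (Z t))"
    using continuous_on_subset[OF Z1_cont[OF d1]] t by auto
  have "((\<lambda>t. fst (Z t)) has_real_derivative fst (Z' x)) (at x)" if "0 < x" "x < t" for x
  proof -
    have "((\<lambda>t. fst (Z t)) has_real_derivative fst (Z' x)) (at x within {0..T})" using d1 that t by auto
    thus ?thesis using at_within_Icc_at[of 0 x T] that t by simp
  qed
  from mvt_der[OF _ c this] False t obtain z where "0 < z" "z < t"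
    "fst (Z t) - fst (Z 0) = (t - 0) * fst (Z' z)" by force
  moreover have "fst (Z' z) < 0" using neg \<open>0 < z\<close> \<open>z < t\<close> t by auto
  ultimately have "fst (Z t) - fst (Z 0) = t * fst (Z' z)" "t * fst (Z' z) < 0" using t
    by (auto simp: mult_pos_neg)
  thus ?thesis by linarith
qed auto

lemma curve:
  fixes Z Z' :: "real \<Rightarrow> real \<times> real"
  assumes dZ: "\<forall>t\<in>{0..T}. (Z has_vector_derivative Z' t) (at t within {0..T})"
    and nz: "\<forall>t\<in>{0..T}. fst (Z' t) \<noteq> 0"
  shows "inj_on (\<lambda>t. fst (Z t)) {0..T}"
    and "\<forall>u\<in>graph_dom T Z. the_inv_into {0..T} (\<lambda>t. fst (Z t)) u \<in> {0..T} \<and>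
           fst (Z (the_inv_into {0..T} (\<lambda>t. fst (Z t)) u)) = u \<and>
           (graph_fun T Z has_real_derivative
              snd (Z' (the_inv_into {0..T} (\<lambda>t. fst (Z t)) u)) / fst (Z' (the_inv_into {0..T} (\<lambda>t. fst (Z t)) u)))
            (at u within graph_dom T Z)"
    and "connected (graph_dom T Z)"
proof -
  define Z1 where "Z1 = (\<lambda>t. fst (Z t))"
  define Z2 where "Z2 = (\<lambda>t. snd (Z t))"
  have d1: "\<forall>t\<in>{0..T}. (Z1 has_real_derivative fst (Z' t)) (at t within {0..T})"
    using comp_derivs(1)[OF dZ] by (simp add: Z1_def)
  have d2: "\<forall>t\<in>{0..T}. (Z2 has_real_derivative snd (Z' t)) (at t within {0..T})"
    using comp_derivs(2)[OF dZ] by (simp add: Z2_def)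
  have c1: "continuous_on {0..T} Z1" using Z1_cont[OF comp_derivs(1)[OF dZ]] by (simp add: Z1_def)
  have inj: "inj_on Z1 {0..T}"
  proof (rule linorder_inj_onI')
    fix a b assume ab: "a \<in> {0..T}" "b \<in> {0..T}" "a < b"
    have c: "continuous_on {a..b} Z1" using continuous_on_subset[OF c1] ab by auto
    have "(Z1 has_real_derivative fst (Z' x)) (at x)" if "a < x" "x < b" for x
    proof -
      have "(Z1 has_real_derivative fst (Z' x)) (at x within {0..T})" using d1 that ab by auto
      thus ?thesis using at_within_Icc_at[of 0 x T] that ab by simp
    qed
    from mvt_der[OF ab(3) c this] obtain z where z: "a < z" "z < b"
      "Z1 b - Z1 a = (b - a) * fst (Z' z)" by blast
    have "fst (Z' z) \<noteq> 0" using nz z ab by auto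
    with z ab(3) show "Z1 a \<noteq> Z1 b" by auto
  qed
  thus "inj_on (\<lambda>t. fst (Z t)) {0..T}" by (simp add: Z1_def)
  have dom: "graph_dom T Z = Z1 ` {0..T}" by (simp add: graph_dom_def Z1_def)
  show "connected (graph_dom T Z)" unfolding dom
    by (rule connected_continuous_image[OF c1 connected_Icc])
  define \<phi> where "\<phi> = the_inv_into {0..T} Z1"
  have gf: "graph_fun T Z = (\<lambda>u. Z2 (\<phi> u))" by (simp add: graph_fun_def Z1_def Z2_def \<phi>_def)
  have phicont: "continuous_on (Z1 ` {0..T}) \<phi>"
    unfolding \<phi>_def by (rule continuous_on_inv_into[OF c1 compact_Icc inj])
  have phiin: "\<forall>u\<in>Z1 ` {0..T}. \<phi> u \<in> {0..T} \<and> Z1 (\<phi> u) = u"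
    using inj by (auto simp: \<phi>_def the_inv_into_f_f f_the_inv_into_f)
  have phiimg: "\<phi> ` (Z1 ` {0..T}) = {0..T}" using inj by (simp add: \<phi>_def)
  show "\<forall>u\<in>graph_dom T Z. the_inv_into {0..T} (\<lambda>t. fst (Z t)) u \<in> {0..T} \<and>
           fst (Z (the_inv_into {0..T} (\<lambda>t. fst (Z t)) u)) = u \<and>
           (graph_fun T Z has_real_derivative
              snd (Z' (the_inv_into {0..T} (\<lambda>t. fst (Z t)) u)) / fst (Z' (the_inv_into {0..T} (\<lambda>t. fst (Z t)) u)))
            (at u within graph_dom T Z)"
  proof
    fix u assume u: "u \<in> graph_dom T Z"
    hence u': "u \<in> Z1 ` {0..T}" using dom by simp
    have pu: "\<phi> u \<in> {0..T}" "Z1 (\<phi> u) = u" using phiin u' by auto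
    have dphi: "(\<phi> has_real_derivative inverse (fst (Z' (\<phi> u)))) (at u within Z1 ` {0..T})"
    proof (rule inv_deriv_within[where f=Z1 and A="{0..T}"])
      show "(Z1 has_real_derivative fst (Z' (\<phi> u))) (at (\<phi> u) within {0..T})" using d1 pu by auto
      show "fst (Z' (\<phi> u)) \<noteq> 0" using nz pu by auto
      show "u \<in> Z1 ` {0..T}" by (rule u')
      show "\<forall>z\<in>Z1 ` {0..T}. \<phi> z \<in> {0..T} \<and> Z1 (\<phi> z) = z" by (rule phiin)
      show "continuous (at u within Z1 ` {0..T}) \<phi>"
        using phicont u' continuous_on_eq_continuous_within by blast
    qed
    have dZ2: "(Z2 has_vector_derivative snd (Z' (\<phi> u))) (at (\<phi> u) within \<phi> ` (Z1 ` {0..T}))"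
      using d2 pu phiimg by (simp add: has_real_derivative_iff_has_vector_derivative)
    have "((Z2 \<circ> \<phi>) has_vector_derivative (inverse (fst (Z' (\<phi> u))) *\<^sub>R snd (Z' (\<phi> u))))
        (at u within Z1 ` {0..T})"
      by (rule vector_diff_chain_within[OF dphi[unfolded has_real_derivative_iff_has_vector_derivative] dZ2])
    hence "(graph_fun T Z has_real_derivative snd (Z' (\<phi> u)) / fst (Z' (\<phi> u))) (at u within graph_dom T Z)"
      by (simp add: gf dom o_def has_real_derivative_iff_has_vector_derivative divide_inverse mult.commute)
    thus "the_inv_into {0..T} (\<lambda>t. fst (Z t)) u \<in> {0..T} \<and>
           fst (Z (the_inv_into {0..T} (\<lambda>t. fst (Z t)) u)) = u \<and>
           (graph_fun T Z has_real_derivative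
              snd (Z' (the_inv_into {0..T} (\<lambda>t. fst (Z t)) u)) / fst (Z' (the_inv_into {0..T} (\<lambda>t. fst (Z t)) u)))
            (at u within graph_dom T Z)"
      using pu by (simp add: \<phi>_def Z1_def)
  qed
qed



lemma abs_fst_le: "\<bar>fst (p::real\<times>real)\<bar> \<le> norm p"
  by (metis norm_fst_le prod.collapse real_norm_def)
lemma abs_snd_le: "\<bar>snd (p::real\<times>real)\<bar> \<le> norm p"
  by (metis norm_snd_le prod.collapse real_norm_def)

lemma psi_lip:
  fixes \<Psi> :: "real\<times>real \<Rightarrow> real\<times>real"
  assumes C1: "\<exists>D :: real \<times> real \<Rightarrow> ((real \<times> real) \<Rightarrow>\<^sub>L (real \<times> real)).
                   (\<forall>x. (\<Psi> has_derivative blinfun_apply (D x)) (at x)) \<and> continuous_on UNIV D"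
  shows "\<exists>K. \<forall>x\<in>cball z0 1. \<forall>y\<in>cball z0 1. norm (\<Psi> x - \<Psi> y) \<le> K * norm (x - y)"
proof -
  from C1 obtain D :: "real \<times> real \<Rightarrow> ((real \<times> real) \<Rightarrow>\<^sub>L (real \<times> real))" where
    D: "\<forall>x. (\<Psi> has_derivative blinfun_apply (D x)) (at x)" "continuous_on UNIV D" by blast
  have "compact (D ` cball z0 1)"
    by (rule compact_continuous_image[OF continuous_on_subset[OF D(2)] compact_cball]) auto
  hence "bounded (D ` cball z0 1)" by (rule compact_imp_bounded)
  then obtain B where B: "\<forall>x\<in>cball z0 1. norm (D x) \<le> B" unfolding bounded_iff by auto
  show ?thesis
  proof (intro exI ballI)
    fix x y assume "x \<in> cball z0 1" "y \<in> cball z0 1"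
    show "norm (\<Psi> x - \<Psi> y) \<le> B * norm (x - y)"
    proof (rule differentiable_bound[where f' = "\<lambda>x. blinfun_apply (D x)"])
      show "convex (cball z0 1)" by simp
      show "(\<Psi> has_derivative blinfun_apply (D x)) (at x within cball z0 1)" for x
        using D(1) has_derivative_at_withinI by blast
      show "onorm (blinfun_apply (D x)) \<le> B" if "x \<in> cball z0 1" for x
        using B that by (simp add: norm_blinfun.rep_eq)
    qed fact+
  qed
qed

lemma quot_bound:
  fixes A1 A2 B1 B2 m M K e :: real
  assumes m: "m > 0" "\<bar>A1\<bar> \<ge> m" "\<bar>B1\<bar> \<ge> m" and M: "\<bar>A2\<bar> \<le> M" "\<bar>A1\<bar> \<le> M"
    and d: "\<bar>B1 - A1\<bar> \<le> K*e" "\<bar>A2 - B2\<bar> \<le> K*e"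
  shows "\<bar>A2/A1 - B2/B1\<bar> \<le> (2*M*K/m^2) * e"
proof -
  have nz: "A1 \<noteq> 0" "B1 \<noteq> 0" using m by auto
  have eq: "A2/A1 - B2/B1 = (A2*(B1-A1) + A1*(A2-B2))/(A1*B1)" using nz by (simp add: field_simps)
  have Ke: "K*e \<ge> 0" using d by linarith
  have "\<bar>A2*(B1-A1) + A1*(A2-B2)\<bar> \<le> \<bar>A2\<bar>*\<bar>B1-A1\<bar> + \<bar>A1\<bar>*\<bar>A2-B2\<bar>"
    by (metis abs_mult abs_triangle_ineq)
  also have "\<dots> \<le> M*(K*e) + M*(K*e)"
    by (intro add_mono mult_mono) (use M d Ke in auto)
  finally have num: "\<bar>A2*(B1-A1) + A1*(A2-B2)\<bar> \<le> 2*M*K*e" by (simp add: algebra_simps)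
  have den: "m*m \<le> \<bar>A1*B1\<bar>" unfolding abs_mult by (intro mult_mono) (use m in auto)
  have "\<bar>A2/A1 - B2/B1\<bar> = \<bar>A2*(B1-A1) + A1*(A2-B2)\<bar> / \<bar>A1*B1\<bar>" by (simp add: eq abs_divide)
  also have "\<dots> \<le> (2*M*K*e) / (m*m)"
  proof (rule frac_le)
    show "0 \<le> 2*M*K*e" using num by (meson abs_ge_zero order_trans)
  qed (use num den m in auto)
  finally show ?thesis by (simp add: power2_eq_square)
qed

lemma G_lip:
  fixes \<Psi> :: "real\<times>real \<Rightarrow> real\<times>real"
  assumes C1: "\<exists>D :: real \<times> real \<Rightarrow> ((real \<times> real) \<Rightarrow>\<^sub>L (real \<times> real)).
                   (\<forall>x. (\<Psi> has_derivative blinfun_apply (D x)) (at x)) \<and> continuous_on UNIV D"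
    and nz: "fst (\<Psi> z0) \<noteq> 0"
  shows "\<exists>\<delta>>0. \<exists>L. \<forall>v y1 y2. \<bar>v - fst z0\<bar> < \<delta> \<longrightarrow> \<bar>y1 - snd z0\<bar> < \<delta> \<longrightarrow> \<bar>y2 - snd z0\<bar> < \<delta> \<longrightarrow>
     \<bar>snd (\<Psi> (v,y1)) / fst (\<Psi> (v,y1)) - snd (\<Psi> (v,y2)) / fst (\<Psi> (v,y2))\<bar> \<le> L * \<bar>y1 - y2\<bar>"
proof -
  from psi_lip[OF C1, of z0] obtain K0 where
    K0: "\<forall>x\<in>cball z0 1. \<forall>y\<in>cball z0 1. norm (\<Psi> x - \<Psi> y) \<le> K0 * norm (x - y)" by blast
  define K where "K = max K0 1"
  have Kpos: "K > 0" by (simp add: K_def)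
  have K: "\<forall>x\<in>cball z0 1. \<forall>y\<in>cball z0 1. norm (\<Psi> x - \<Psi> y) \<le> K * norm (x - y)"
  proof (intro ballI)
    fix x y assume "x \<in> cball z0 1" "y \<in> cball z0 1"
    with K0 have "norm (\<Psi> x - \<Psi> y) \<le> K0 * norm (x - y)" by blast
    also have "\<dots> \<le> K * norm (x - y)" by (intro mult_right_mono) (auto simp: K_def)
    finally show "norm (\<Psi> x - \<Psi> y) \<le> K * norm (x - y)" .
  qed
  define m where "m = \<bar>fst (\<Psi> z0)\<bar> / 2"
  have mpos: "m > 0" using nz by (simp add: m_def)
  define M where "M = norm (\<Psi> z0) + m"
  define \<delta> where "\<delta> = min (1/2) (m / (2*K))"
  have dpos: "\<delta> > 0" using mpos Kpos by (simp add: \<delta>_def)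
  have dK: "K * (2*\<delta>) \<le> m" using Kpos mpos
    by (simp add: \<delta>_def min_def field_simps)
  have inball: "(v,y) \<in> cball z0 1" "norm ((v,y) - z0) \<le> 2*\<delta>"
    if "\<bar>v - fst z0\<bar> < \<delta>" "\<bar>y - snd z0\<bar> < \<delta>" for v y
  proof -
    have "norm ((v,y) - z0) = norm (v - fst z0, y - snd z0)" by (cases z0) simp
    also have "\<dots> \<le> norm (v - fst z0) + norm (y - snd z0)" by (rule norm_Pair_le)
    finally have "norm ((v,y) - z0) \<le> 2*\<delta>" using that by simp
    thus "norm ((v,y) - z0) \<le> 2*\<delta>" .
    thus "(v,y) \<in> cball z0 1" using \<open>norm ((v,y) - z0) \<le> 2*\<delta>\<close>
      by (simp add: dist_norm norm_minus_commute \<delta>_def)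
  qed
  have bnds: "\<bar>fst (\<Psi> (v,y))\<bar> \<ge> m \<and> norm (\<Psi> (v,y)) \<le> M"
    if "\<bar>v - fst z0\<bar> < \<delta>" "\<bar>y - snd z0\<bar> < \<delta>" for v y
  proof -
    have z0b: "z0 \<in> cball z0 1" by simp
    have "norm (\<Psi> (v,y) - \<Psi> z0) \<le> K * norm ((v,y) - z0)" using K inball[OF that] z0b by blast
    also have "\<dots> \<le> K * (2*\<delta>)" using inball[OF that] Kpos by (intro mult_left_mono) auto
    also have "\<dots> \<le> m" by (rule dK)
    finally have n: "norm (\<Psi> (v,y) - \<Psi> z0) \<le> m" .
    have "\<bar>fst (\<Psi> (v,y)) - fst (\<Psi> z0)\<bar> \<le> m" using abs_fst_le[of "\<Psi> (v,y) - \<Psi> z0"] n by simp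
    hence 1: "\<bar>fst (\<Psi> (v,y))\<bar> \<ge> m" unfolding m_def by linarith
    have "norm (\<Psi> (v,y)) \<le> norm (\<Psi> z0) + norm (\<Psi> (v,y) - \<Psi> z0)" by (metis norm_triangle_sub)
    hence "norm (\<Psi> (v,y)) \<le> M" using n by (simp add: M_def)
    with 1 show ?thesis by simp
  qed
  show ?thesis
  proof (intro exI conjI allI impI)
    fix v y1 y2 assume a: "\<bar>v - fst z0\<bar> < \<delta>" "\<bar>y1 - snd z0\<bar> < \<delta>" "\<bar>y2 - snd z0\<bar> < \<delta>"
    have b1: "\<bar>fst (\<Psi> (v,y1))\<bar> \<ge> m" "norm (\<Psi> (v,y1)) \<le> M" using bnds a by auto
    have b2: "\<bar>fst (\<Psi> (v,y2))\<bar> \<ge> m" using bnds a by auto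
    have "norm (\<Psi> (v,y2) - \<Psi> (v,y1)) \<le> K * norm ((v,y2) - (v,y1))"
      using K inball(1)[OF a(1,2)] inball(1)[OF a(1,3)] by blast
    also have "norm ((v,y2) - (v,y1)) = \<bar>y1 - y2\<bar>" by (simp add: norm_Pair)
    finally have L: "norm (\<Psi> (v,y2) - \<Psi> (v,y1)) \<le> K * \<bar>y1 - y2\<bar>" .
    show "\<bar>snd (\<Psi> (v,y1)) / fst (\<Psi> (v,y1)) - snd (\<Psi> (v,y2)) / fst (\<Psi> (v,y2))\<bar> \<le> (2*M*K/m^2) * \<bar>y1 - y2\<bar>"
    proof (rule quot_bound[OF mpos b1(1) b2])
      show "\<bar>snd (\<Psi> (v, y1))\<bar> \<le> M" using abs_snd_le[of "\<Psi> (v,y1)"] b1 by linarith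
      show "\<bar>fst (\<Psi> (v, y1))\<bar> \<le> M" using abs_fst_le[of "\<Psi> (v,y1)"] b1 by linarith
      show "\<bar>fst (\<Psi> (v, y2)) - fst (\<Psi> (v, y1))\<bar> \<le> K * \<bar>y1 - y2\<bar>"
        using abs_fst_le[of "\<Psi> (v,y2) - \<Psi> (v,y1)"] L by simp
      have "\<bar>snd (\<Psi> (v, y1)) - snd (\<Psi> (v, y2))\<bar> = \<bar>snd (\<Psi> (v,y2) - \<Psi> (v,y1))\<bar>" by simp
      thus "\<bar>snd (\<Psi> (v, y1)) - snd (\<Psi> (v, y2))\<bar> \<le> K * \<bar>y1 - y2\<bar>"
        using abs_snd_le[of "\<Psi> (v,y2) - \<Psi> (v,y1)"] L by linarith
    qed
  qed (rule dpos)
qed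



lemma deriv_cont_on:
  assumes "\<forall>x\<in>S. (p has_real_derivative p' x) (at x within S)"
  shows "continuous_on S p"
  using assms DERIV_continuous continuous_on_eq_continuous_within by blast

lemma apply_fwd:
  fixes p q p' q' :: "real\<Rightarrow>real" and G :: "real\<Rightarrow>real\<Rightarrow>real"
  assumes cP: "connected DP" and cQ: "connected DQ" and c: "c \<in> DP" "c \<in> DQ"
    and u: "u \<in> DP" "u \<in> DQ" "c \<le> u"
    and dp: "\<forall>x\<in>DP. (p has_real_derivative p' x) (at x within DP)"
    and dq: "\<forall>x\<in>DQ. (q has_real_derivative q' x) (at x within DQ)"
    and ip: "\<forall>x\<in>DP. p' x \<le> G x (p x)" and iq: "\<forall>x\<in>DQ. q' x \<ge> G x (q x)"
    and init: "p c = q c"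
    and lip: "\<forall>a\<in>DQ. \<exists>\<delta>>0. \<exists>L. \<forall>v y1 y2. \<bar>v - a\<bar> < \<delta> \<longrightarrow>
        \<bar>y1 - q a\<bar> < \<delta> \<longrightarrow> \<bar>y2 - q a\<bar> < \<delta> \<longrightarrow> \<bar>G v y1 - G v y2\<bar> \<le> L * \<bar>y1 - y2\<bar>"
  shows "p u \<le> q u"
proof -
  have sP: "{c..u} \<subseteq> DP" by (rule connected_contains_Icc[OF cP c(1) u(1)])
  have sQ: "{c..u} \<subseteq> DQ" by (rule connected_contains_Icc[OF cQ c(2) u(2)])
  show ?thesis
  proof (rule core_fwd[where p=p and q=q and c=c and d=u and p'=p' and q'=q' and G=G])
    show "c \<le> u" by fact
    show "continuous_on {c..u} p" using continuous_on_subset[OF deriv_cont_on[OF dp] sP] .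
    show "continuous_on {c..u} q" using continuous_on_subset[OF deriv_cont_on[OF dq] sQ] .
    show "p c = q c" by fact
    show "\<forall>x\<in>{c<..<u}. (p has_real_derivative p' x) (at x within {c..u}) \<and> p' x \<le> G x (p x)"
    proof (intro ballI conjI)
      fix x assume "x \<in> {c<..<u}"
      hence xD: "x \<in> DP" using sP by auto
      show "(p has_real_derivative p' x) (at x within {c..u})"
        using DERIV_subset[of p "p' x" x DP "{c..u}"] dp xD sP by blast
      show "p' x \<le> G x (p x)" using ip xD by blast
    qed
    show "\<forall>x\<in>{c<..<u}. (q has_real_derivative q' x) (at x within {c..u}) \<and> q' x \<ge> G x (q x)"
    proof (intro ballI conjI)
      fix x assume "x \<in> {c<..<u}"
      hence xD: "x \<in> DQ" using sQ by auto
      show "(q has_real_derivative q' x) (at x within {c..u})"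
        using DERIV_subset[of q "q' x" x DQ "{c..u}"] dq xD sQ by blast
      show "q' x \<ge> G x (q x)" using iq xD by blast
    qed
    show "\<forall>a\<in>{c..u}. p a = q a \<longrightarrow> (\<exists>\<delta>>0. \<exists>L. \<forall>v y1 y2. \<bar>v - a\<bar> < \<delta> \<longrightarrow>
        \<bar>y1 - q a\<bar> < \<delta> \<longrightarrow> \<bar>y2 - q a\<bar> < \<delta> \<longrightarrow> \<bar>G v y1 - G v y2\<bar> \<le> L * \<bar>y1 - y2\<bar>)"
      using lip sQ by blast
  qed
qed

lemma apply_bwd:
  fixes p q p' q' :: "real\<Rightarrow>real" and G :: "real\<Rightarrow>real\<Rightarrow>real"
  assumes cP: "connected DP" and cQ: "connected DQ" and c: "c \<in> DP" "c \<in> DQ"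
    and u: "u \<in> DP" "u \<in> DQ" "u \<le> c"
    and dp: "\<forall>x\<in>DP. (p has_real_derivative p' x) (at x within DP)"
    and dq: "\<forall>x\<in>DQ. (q has_real_derivative q' x) (at x within DQ)"
    and ip: "\<forall>x\<in>DP. p' x \<ge> G x (p x)" and iq: "\<forall>x\<in>DQ. q' x \<le> G x (q x)"
    and init: "p c = q c"
    and lip: "\<forall>a\<in>DQ. \<exists>\<delta>>0. \<exists>L. \<forall>v y1 y2. \<bar>v - a\<bar> < \<delta> \<longrightarrow>
        \<bar>y1 - q a\<bar> < \<delta> \<longrightarrow> \<bar>y2 - q a\<bar> < \<delta> \<longrightarrow> \<bar>G v y1 - G v y2\<bar> \<le> L * \<bar>y1 - y2\<bar>"
  shows "p u \<le> q u"
proof -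
  have sP: "{u..c} \<subseteq> DP" by (rule connected_contains_Icc[OF cP u(1) c(1)])
  have sQ: "{u..c} \<subseteq> DQ" by (rule connected_contains_Icc[OF cQ u(2) c(2)])
  show ?thesis
  proof (rule core_bwd[where p=p and q=q and d=u and p'=p' and q'=q' and G=G and c=c])
    show "u \<le> c" by fact
    show "continuous_on {u..c} p" using continuous_on_subset[OF deriv_cont_on[OF dp] sP] .
    show "continuous_on {u..c} q" using continuous_on_subset[OF deriv_cont_on[OF dq] sQ] .
    show "p c = q c" by fact
    show "\<forall>x\<in>{u<..<c}. (p has_real_derivative p' x) (at x within {u..c}) \<and> p' x \<ge> G x (p x)"
    proof (intro ballI conjI)
      fix x assume "x \<in> {u<..<c}"
      hence xD: "x \<in> DP" using sP by auto
      show "(p has_real_derivative p' x) (at x within {u..c})"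
        using DERIV_subset[of p "p' x" x DP "{u..c}"] dp xD sP by blast
      show "p' x \<ge> G x (p x)" using ip xD by blast
    qed
    show "\<forall>x\<in>{u<..<c}. (q has_real_derivative q' x) (at x within {u..c}) \<and> q' x \<le> G x (q x)"
    proof (intro ballI conjI)
      fix x assume "x \<in> {u<..<c}"
      hence xD: "x \<in> DQ" using sQ by auto
      show "(q has_real_derivative q' x) (at x within {u..c})"
        using DERIV_subset[of q "q' x" x DQ "{u..c}"] dq xD sQ by blast
      show "q' x \<le> G x (q x)" using iq xD by blast
    qed
    show "\<forall>a\<in>{u..c}. p a = q a \<longrightarrow> (\<exists>\<delta>>0. \<exists>L. \<forall>v y1 y2. \<bar>v - a\<bar> < \<delta> \<longrightarrow>
        \<bar>y1 - q a\<bar> < \<delta> \<longrightarrow> \<bar>y2 - q a\<bar> < \<delta> \<longrightarrow> \<bar>G v y1 - G v y2\<bar> \<le> L * \<bar>y1 - y2\<bar>)"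
      using lip sQ by blast
  qed
qed



theorem mainTheorem16:
  fixes T :: real
    and X Y X' Y' :: "real \<Rightarrow> real \<times> real"
    and \<Psi> :: "real \<times> real \<Rightarrow> real \<times> real"
  assumes X_deriv: "\<forall>t\<in>{0..T}. (X has_vector_derivative X' t) (at t within {0..T})"
    and X'_cont: "continuous_on {0..T} X'"
    and Y_deriv: "\<forall>t\<in>{0..T}. (Y has_vector_derivative Y' t) (at t within {0..T})"
    and Y'_cont: "continuous_on {0..T} Y'"
    and Psi_C1: "\<exists>D :: real \<times> real \<Rightarrow> ((real \<times> real) \<Rightarrow>\<^sub>L (real \<times> real)).
                   (\<forall>x. (\<Psi> has_derivative blinfun_apply (D x)) (at x)) \<and> continuous_on UNIV D"
    and Y_ode: "\<forall>t\<in>{0..T}. Y' t = \<Psi> (Y t)"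
    and init_eq: "X 0 = Y 0"
    and init_E: "fst (\<Psi> (X 0)) > 0 \<or> fst (\<Psi> (X 0)) < 0"
    and sign_pos: "fst (\<Psi> (X 0)) > 0 \<Longrightarrow>
                     \<forall>t\<in>{0<..T}. fst (\<Psi> (X t)) > 0 \<and> fst (\<Psi> (Y t)) > 0"
    and sign_neg: "fst (\<Psi> (X 0)) < 0 \<Longrightarrow>
                     \<forall>t\<in>{0<..T}. fst (\<Psi> (X t)) < 0 \<and> fst (\<Psi> (Y t)) < 0"
    and cmp: "(\<forall>t\<in>{0..T}. le2 (X' t) (\<Psi> (X t))) \<or> (\<forall>t\<in>{0..T}. ge2 (X' t) (\<Psi> (X t)))"
  shows "inj_on (\<lambda>t. fst (X t)) {0..T} \<and> inj_on (\<lambda>t. fst (Y t)) {0..T}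
    \<and> (\<forall>u\<in>graph_dom T X - {fst (X 0)}. graph_fun T X differentiable (at u within graph_dom T X))
    \<and> (\<forall>u\<in>graph_dom T Y - {fst (X 0)}. graph_fun T Y differentiable (at u within graph_dom T Y))
    \<and> ((\<forall>t\<in>{0..T}. le2 (X' t) (\<Psi> (X t))) \<longrightarrow>
          (\<forall>u\<in>graph_dom T X \<inter> graph_dom T Y. graph_fun T X u \<le> graph_fun T Y u))
    \<and> ((\<forall>t\<in>{0..T}. ge2 (X' t) (\<Psi> (X t))) \<longrightarrow>
          (\<forall>u\<in>graph_dom T X \<inter> graph_dom T Y. graph_fun T X u \<ge> graph_fun T Y u))"
proof (cases "T < 0")
  case True
  hence "{0..T} = {}" by auto
  thus ?thesis by (simp add: graph_dom_def)
next
  case False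
  hence t0: "(0::real) \<in> {0..T}" by auto
  have hX1: "\<forall>t\<in>{0..T}. fst (X' t) = fst (\<Psi> (X t))" using cmp by (auto simp: le2_def ge2_def)
  have hY1: "\<forall>t\<in>{0..T}. fst (Y' t) = fst (\<Psi> (Y t))" using Y_ode by auto
  have nzX: "\<forall>t\<in>{0..T}. fst (\<Psi> (X t)) \<noteq> 0"
  proof
    fix t assume t: "t \<in> {0..T}"
    show "fst (\<Psi> (X t)) \<noteq> 0"
    proof (cases "t = 0")
      case True thus ?thesis using init_E by auto
    next
      case False
      hence "t \<in> {0<..T}" using t by auto
      thus ?thesis using init_E sign_pos sign_neg by fastforce
    qed
  qed
  have nzY: "\<forall>t\<in>{0..T}. fst (\<Psi> (Y t)) \<noteq> 0"
  proof
    fix t assume t: "t \<in> {0..T}"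
    show "fst (\<Psi> (Y t)) \<noteq> 0"
    proof (cases "t = 0")
      case True thus ?thesis using init_E init_eq by auto
    next
      case False
      hence "t \<in> {0<..T}" using t by auto
      thus ?thesis using init_E sign_pos sign_neg by fastforce
    qed
  qed
  have nzX': "\<forall>t\<in>{0..T}. fst (X' t) \<noteq> 0" using nzX hX1 by auto
  have nzY': "\<forall>t\<in>{0..T}. fst (Y' t) \<noteq> 0" using nzY hY1 by auto
  note cX = curve[OF X_deriv nzX'] and cY = curve[OF Y_deriv nzY']
  define G where "G = (\<lambda>v y. snd (\<Psi> (v,y)) / fst (\<Psi> (v,y)))"
  define \<phi>X where "\<phi>X = the_inv_into {0..T} (\<lambda>t. fst (X t))"
  define \<phi>Y where "\<phi>Y = the_inv_into {0..T} (\<lambda>t. fst (Y t))"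
  define fX where "fX = graph_fun T X"
  define fY where "fY = graph_fun T Y"
  define DX where "DX = graph_dom T X"
  define DY where "DY = graph_dom T Y"
  define dfX where "dfX = (\<lambda>u. snd (X' (\<phi>X u)) / fst (\<Psi> (u, fX u)))"
  have XP: "\<forall>u\<in>DX. \<phi>X u \<in> {0..T} \<and> X (\<phi>X u) = (u, fX u)"
    using cX(2) by (auto simp: \<phi>X_def fX_def DX_def graph_fun_def prod_eq_iff)
  have YP: "\<forall>u\<in>DY. \<phi>Y u \<in> {0..T} \<and> Y (\<phi>Y u) = (u, fY u)"
    using cY(2) by (auto simp: \<phi>Y_def fY_def DY_def graph_fun_def prod_eq_iff)
  have dX: "\<forall>u\<in>DX. (fX has_real_derivative dfX u) (at u within DX)"
  proof
    fix u assume u: "u \<in> DX"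
    have eq: "fst (X' (\<phi>X u)) = fst (\<Psi> (u, fX u))" using hX1 XP u by metis
    have h: "(fX has_real_derivative snd (X' (\<phi>X u)) / fst (X' (\<phi>X u))) (at u within DX)"
      using cX(2) u by (simp add: fX_def DX_def \<phi>X_def)
    show "(fX has_real_derivative dfX u) (at u within DX)"
      unfolding dfX_def eq[symmetric] by (rule h)
  qed
  have dY: "\<forall>u\<in>DY. (fY has_real_derivative G u (fY u)) (at u within DY)"
  proof
    fix u assume u: "u \<in> DY"
    have eq: "Y' (\<phi>Y u) = \<Psi> (u, fY u)" using Y_ode YP u by metis
    have h: "(fY has_real_derivative snd (Y' (\<phi>Y u)) / fst (Y' (\<phi>Y u))) (at u within DY)"
      using cY(2) u by (simp add: fY_def DY_def \<phi>Y_def)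
    show "(fY has_real_derivative G u (fY u)) (at u within DY)"
      unfolding G_def eq[symmetric] by (rule h)
  qed
  have LX: "\<forall>a\<in>DX. \<exists>\<delta>>0. \<exists>L. \<forall>v y1 y2. \<bar>v - a\<bar> < \<delta> \<longrightarrow>
        \<bar>y1 - fX a\<bar> < \<delta> \<longrightarrow> \<bar>y2 - fX a\<bar> < \<delta> \<longrightarrow> \<bar>G v y1 - G v y2\<bar> \<le> L * \<bar>y1 - y2\<bar>"
  proof
    fix a assume a: "a \<in> DX"
    have "fst (\<Psi> (a, fX a)) \<noteq> 0" using nzX XP a by metis
    from G_lip[OF Psi_C1 this] show "\<exists>\<delta>>0. \<exists>L. \<forall>v y1 y2. \<bar>v - a\<bar> < \<delta> \<longrightarrow>
        \<bar>y1 - fX a\<bar> < \<delta> \<longrightarrow> \<bar>y2 - fX a\<bar> < \<delta> \<longrightarrow> \<bar>G v y1 - G v y2\<bar> \<le> L * \<bar>y1 - y2\<bar>"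
      by (simp add: G_def)
  qed
  have LY: "\<forall>a\<in>DY. \<exists>\<delta>>0. \<exists>L. \<forall>v y1 y2. \<bar>v - a\<bar> < \<delta> \<longrightarrow>
        \<bar>y1 - fY a\<bar> < \<delta> \<longrightarrow> \<bar>y2 - fY a\<bar> < \<delta> \<longrightarrow> \<bar>G v y1 - G v y2\<bar> \<le> L * \<bar>y1 - y2\<bar>"
  proof
    fix a assume a: "a \<in> DY"
    have "fst (\<Psi> (a, fY a)) \<noteq> 0" using nzY YP a by metis
    from G_lip[OF Psi_C1 this] show "\<exists>\<delta>>0. \<exists>L. \<forall>v y1 y2. \<bar>v - a\<bar> < \<delta> \<longrightarrow>
        \<bar>y1 - fY a\<bar> < \<delta> \<longrightarrow> \<bar>y2 - fY a\<bar> < \<delta> \<longrightarrow> \<bar>G v y1 - G v y2\<bar> \<le> L * \<bar>y1 - y2\<bar>"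
      by (simp add: G_def)
  qed
  define c where "c = fst (X 0)"
  have cDX: "c \<in> DX" using t0 by (auto simp: c_def DX_def graph_dom_def)
  have cDY: "c \<in> DY" using t0 init_eq by (auto simp: c_def DY_def graph_dom_def)
  have fXc: "fX c = snd (X 0)"
    using the_inv_into_f_f[OF cX(1) t0] by (simp add: fX_def graph_fun_def c_def)
  have fYc: "fY c = snd (X 0)"
    using the_inv_into_f_f[OF cY(1) t0] init_eq by (simp add: fY_def graph_fun_def c_def)
  have conX: "connected DX" using cX(3) by (simp add: DX_def)
  have conY: "connected DY" using cY(3) by (simp add: DY_def)
  have dqY: "\<forall>x\<in>DY. G x (fY x) \<le> G x (fY x)" by simp
  have comp: "((\<forall>t\<in>{0..T}. le2 (X' t) (\<Psi> (X t))) \<longrightarrow> (\<forall>u\<in>DX \<inter> DY. fX u \<le> fY u))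
        \<and> ((\<forall>t\<in>{0..T}. ge2 (X' t) (\<Psi> (X t))) \<longrightarrow> (\<forall>u\<in>DX \<inter> DY. fX u \<ge> fY u))"
  proof (cases "fst (\<Psi> (X 0)) > 0")
    case True
    have posX: "\<forall>t\<in>{0..T}. fst (\<Psi> (X t)) > 0"
      using True sign_pos by (metis atLeastAtMost_iff greaterThanAtMost_iff less_eq_real_def)
    have posY: "\<forall>t\<in>{0..T}. fst (\<Psi> (Y t)) > 0"
      using True sign_pos init_eq by (metis atLeastAtMost_iff greaterThanAtMost_iff less_eq_real_def)
    have posu: "\<forall>u\<in>DX. fst (\<Psi> (u, fX u)) > 0" using posX XP by metis
    have cle: "c \<le> u" if "u \<in> DX" for u
    proof -
      have "fst (X 0) \<le> fst (X (\<phi>X u))"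
        by (rule mono_pos[OF X_deriv]) (use posX hX1 XP that in auto)
      thus ?thesis using XP that by (simp add: c_def)
    qed
    show ?thesis
    proof (intro conjI impI ballI)
      fix u assume le: "\<forall>t\<in>{0..T}. le2 (X' t) (\<Psi> (X t))" and u: "u \<in> DX \<inter> DY"
      have ipX: "\<forall>x\<in>DX. dfX x \<le> G x (fX x)"
      proof
        fix x assume x: "x \<in> DX"
        have "snd (X' (\<phi>X x)) \<le> snd (\<Psi> (x, fX x))" using le XP x by (metis le2_def)
        thus "dfX x \<le> G x (fX x)" unfolding dfX_def G_def
          using posu x by (metis divide_right_mono less_imp_le)
      qed
      show "fX u \<le> fY u"
        by (rule apply_fwd[OF conX conY cDX cDY _ _ cle dX dY ipX dqY _ LY]) (use u fXc fYc in auto)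
    next
      fix u assume ge: "\<forall>t\<in>{0..T}. ge2 (X' t) (\<Psi> (X t))" and u: "u \<in> DX \<inter> DY"
      have ipX: "\<forall>x\<in>DX. dfX x \<ge> G x (fX x)"
      proof
        fix x assume x: "x \<in> DX"
        have "snd (X' (\<phi>X x)) \<ge> snd (\<Psi> (x, fX x))" using ge XP x by (metis ge2_def)
        thus "dfX x \<ge> G x (fX x)" unfolding dfX_def G_def
          using posu x by (metis divide_right_mono less_imp_le)
      qed
      show "fX u \<ge> fY u"
        by (rule apply_fwd[OF conY conX cDY cDX _ _ cle dY dX dqY ipX _ LX]) (use u fXc fYc in auto)
    qed
  next
    case False
    hence neg0: "fst (\<Psi> (X 0)) < 0" using init_E by auto
    have negX: "\<forall>t\<in>{0..T}. fst (\<Psi> (X t)) < 0"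
      using neg0 sign_neg by (metis atLeastAtMost_iff greaterThanAtMost_iff less_eq_real_def)
    have negu: "\<forall>u\<in>DX. fst (\<Psi> (u, fX u)) < 0" using negX XP by metis
    have cge: "u \<le> c" if "u \<in> DX" for u
    proof -
      have "fst (X 0) \<ge> fst (X (\<phi>X u))"
        by (rule mono_neg[OF X_deriv]) (use negX hX1 XP that in auto)
      thus ?thesis using XP that by (simp add: c_def)
    qed
    show ?thesis
    proof (intro conjI impI ballI)
      fix u assume le: "\<forall>t\<in>{0..T}. le2 (X' t) (\<Psi> (X t))" and u: "u \<in> DX \<inter> DY"
      have ipX: "\<forall>x\<in>DX. dfX x \<ge> G x (fX x)"
      proof
        fix x assume x: "x \<in> DX"
        have "snd (X' (\<phi>X x)) \<le> snd (\<Psi> (x, fX x))" using le XP x by (metis le2_def)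
        thus "dfX x \<ge> G x (fX x)" unfolding dfX_def G_def
          using negu x by (metis divide_right_mono_neg less_imp_le)
      qed
      show "fX u \<le> fY u"
        by (rule apply_bwd[OF conX conY cDX cDY _ _ cge dX dY ipX dqY _ LY]) (use u fXc fYc in auto)
    next
      fix u assume ge: "\<forall>t\<in>{0..T}. ge2 (X' t) (\<Psi> (X t))" and u: "u \<in> DX \<inter> DY"
      have ipX: "\<forall>x\<in>DX. dfX x \<le> G x (fX x)"
      proof
        fix x assume x: "x \<in> DX"
        have "snd (X' (\<phi>X x)) \<ge> snd (\<Psi> (x, fX x))" using ge XP x by (metis ge2_def)
        thus "dfX x \<le> G x (fX x)" unfolding dfX_def G_def
          using negu x by (metis divide_right_mono_neg less_imp_le)
      qed
      show "fX u \<ge> fY u"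
        by (rule apply_bwd[OF conY conX cDY cDX _ _ cge dY dX dqY ipX _ LX]) (use u fXc fYc in auto)
    qed
  qed
  have diffX: "\<forall>u\<in>DX. fX differentiable (at u within DX)"
    using dX real_differentiable_def by blast
  have diffY: "\<forall>u\<in>DY. fY differentiable (at u within DY)"
    using dY real_differentiable_def by blast
  show ?thesis using cX(1) cY(1) diffX diffY comp
    by (auto simp: fX_def fY_def DX_def DY_def)
qed

end
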